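(* For all integers $k \geq 2$ and $n \geq 2k+3$, \[\iota(B_{n,C(k)}, \{K_{1,k}\}) = \left\lfloor \frac{2n}{2k+3} \right\rfloor.\]
   Context: Graphs are finite and simple. For $D \subseteq V(G)$, $N[D]$ is the union of closed neighbourhoods of vertices of $D$; $D$ is $\{K_{1,k}\}$-isolating if $G - N[D]$ contains no copy of the star $K_{1,k}$ (equivalently has maximum degree less than $k$), and $\iota(G,\{K_{1,k}\})$ is the minimum size of such a set. Define $\mathrm{mod}^*$ as the usual modulo operation except that $ba \ \mathrm{mod}^*\ a = a$ (instead of $0$). For $2 \le r < m$ (and similarly for $r \geq 1$), $C_m^r$ is the graph on $[m]$ with edges $\{i, (i+j) \ \mathrm{mod}^*\ m\}$ for $i \in [m]$, $j \in [r]$. For $k \geq 2$: if $k$ is even, $C(k) = C_{2k+2}^{k/2}$; if $k$ is odd, $C(k)$ has vertex set $[2k+2]$ and edge set $E(C_{2k+2}^{(k-1)/2}) \cup \{\{i, i+\frac{k+1}{2}\} : i \in [\frac{k+1}{2}] \cup ([k+1+\frac{k+1}{2}] \setminus [k+1])\}$. For $n \geq 2k+3$, $B_{n,C(k)}$ is defined as follows. Let $q = \lfloor n/(2k+3) \rfloor$ and $n = q(2k+3)+r$ with $0 \le r \le 2k+2$. Let $u_1,\dots,u_{q+r}$ be new vertices. Let $R$ be the empty graph if $r \le 1$, and if $r \ge 2$ let $R$ be the graph with vertex set $\{u_{q+j} : j \in [r]\}$ and edge set $\{u_{q+r}u_{q+j} : j \in [r-1]\}$. Let $G_1,\dots,G_q$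 be pairwise disjoint copies of $C(k)$ (disjoint from the $u$'s), with $v_{i,1},\dots,v_{i,2k+2}$ the vertices of $G_i$ corresponding to $1,\dots,2k+2$. Let $t = \min\{1,r\}$. Then $B_{n,C(k)}$ has vertex set $\{u_1,\dots,u_{q+r}\} \cup \bigcup_{i=1}^q V(G_i)$ and edge set $\{u_iv_{i,1} : i \in [q]\} \cup \{u_iu_{i+1} : i \in [q+t-1]\} \cup E(R) \cup \bigcup_{i=1}^q E(G_i)$. *)

theory Defs
  imports Main
begin

definition closed_nbhd :: "'a set \<Rightarrow> 'a set set \<Rightarrow> 'a set \<Rightarrow> 'a set" where
  "closed_nbhd V E D = D \<union> {u \<in> V. \<exists>v\<in>D. {u, v} \<in> E}"

definition has_star :: "'a set \<Rightarrow> 'a set set \<Rightarrow> nat \<Rightarrow> bool" where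
  "has_star W E k \<longleftrightarrow> (\<exists>c L. c \<in> W \<and> L \<subseteq> W \<and> c \<notin> L \<and> card L = k \<and> finite L
       \<and> (\<forall>x\<in>L. {c, x} \<in> E))"

definition star_isolating :: "'a set \<Rightarrow> 'a set set \<Rightarrow> nat \<Rightarrow> 'a set \<Rightarrow> bool" where
  "star_isolating V E k D \<longleftrightarrow> D \<subseteq> V \<and> \<not> has_star (V - closed_nbhd V E D) E k"

definition iota_star :: "'a set \<Rightarrow> 'a set set \<Rightarrow> nat \<Rightarrow> nat" where
  "iota_star V E k = Min (card ` {D. star_isolating V E k D})"

definition modstar :: "nat \<Rightarrow> nat \<Rightarrow> nat" where
  "modstar x a = (if x mod a = 0 then a else x mod a)"

definition circ_pow_edges :: "nat \<Rightarrow> nat \<Rightarrow> nat set set" where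
  "circ_pow_edges m r = {{i, modstar (i + j) m} | i j. i \<in> {1..m} \<and> j \<in> {1..r}}"

definition Ck_edges :: "nat \<Rightarrow> nat set set" where
  "Ck_edges k = (if even k then circ_pow_edges (2*k+2) (k div 2)
     else circ_pow_edges (2*k+2) ((k - 1) div 2) \<union>
       {{i, i + (k + 1) div 2} | i. i \<in> {1..(k+1) div 2} \<union> ({1..k+1+(k+1) div 2} - {1..k+1})})"

datatype bvert = U nat | W nat nat  (* W i j = v_{i,j}, vertex j of copy G_i *)

definition B_verts :: "nat \<Rightarrow> nat \<Rightarrow> bvert set" where
  "B_verts k n = (let q = n div (2*k+3); r = n mod (2*k+3) in
     U ` {1..q+r} \<union> {W i j | i j. i \<in> {1..q} \<and> j \<in> {1..2*k+2}})"

definition B_edges :: "nat \<Rightarrow> nat \<Rightarrow> bvert set set" where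
  "B_edges k n = (let q = n div (2*k+3); r = n mod (2*k+3); t = min 1 r in
     {{U i, W i 1} | i. i \<in> {1..q}}
     \<union> {{U i, U (i+1)} | i. i \<in> {1..q+t-1}}
     \<union> (if r \<ge> 2 then {{U (q+r), U (q+j)} | j. j \<in> {1..r-1}} else {})
     \<union> {{W i a, W i b} | i a b. i \<in> {1..q} \<and> {a, b} \<in> Ck_edges k})"

end

theory Submission
  imports Defs
begin


lemma modstar_eq:
  assumes "1 \<le> i" "i \<le> m" "1 \<le> j" "j < m"
  shows "modstar (i+j) m = (if i+j \<le> m then i+j else i+j-m)"
proof (cases "i+j < m")
  case True then show ?thesis using assms by (simp add: modstar_def)
next
  case False
  show ?thesis
  proof (cases "i+j = m")
    case True then show ?thesis by (simp add: modstar_def)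
  next
    case F2: False
    then have "(i+j) mod m = (i+j-m) mod m" using False by (simp add: le_mod_geq)
    also have "\<dots> = i+j-m" using assms by (intro mod_less) linarith
    finally have "(i+j) mod m = i+j-m" .
    moreover have "i+j-m > 0" using F2 False by simp
    ultimately show ?thesis using F2 False by (simp add: modstar_def)
  qed
qed

lemma circ_adj:
  assumes "r < m"
  shows "{a,b} \<in> circ_pow_edges m r \<longleftrightarrow>
    (a \<in> {1..m} \<and> b \<in> {1..m} \<and> (\<exists>j\<in>{1..r}. b = a+j \<or> b+m = a+j \<or> a = b+j \<or> a+m = b+j))"
proof
  assume "{a,b} \<in> circ_pow_edges m r"
  then obtain i j where ij: "i \<in> {1..m}" "j \<in> {1..r}" "{a,b} = {i, modstar (i+j) m}"
    unfolding circ_pow_edges_def by blast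
  have ms: "modstar (i+j) m = (if i+j \<le> m then i+j else i+j-m)"
    using ij assms by (intro modstar_eq) auto
  from ij(3) have "(a = i \<and> b = modstar (i+j) m) \<or> (b = i \<and> a = modstar (i+j) m)"
    by (auto simp: doubleton_eq_iff)
  then show "a \<in> {1..m} \<and> b \<in> {1..m} \<and> (\<exists>j\<in>{1..r}. b = a+j \<or> b+m = a+j \<or> a = b+j \<or> a+m = b+j)"
    using ij(1,2) assms unfolding ms by (auto split: if_splits intro!: bexI[of _ j])
next
  assume H: "a \<in> {1..m} \<and> b \<in> {1..m} \<and> (\<exists>j\<in>{1..r}. b = a+j \<or> b+m = a+j \<or> a = b+j \<or> a+m = b+j)"
  then obtain j where j: "j \<in> {1..r}" "b = a+j \<or> b+m = a+j \<or> a = b+j \<or> a+m = b+j" by blast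
  have mem: "\<And>i. i \<in> {1..m} \<Longrightarrow> {i, modstar (i+j) m} \<in> circ_pow_edges m r"
    unfolding circ_pow_edges_def using j(1) by blast
  from j(2) show "{a,b} \<in> circ_pow_edges m r"
  proof (elim disjE)
    assume "b = a+j"
    then have "modstar (a+j) m = b" using H j assms by (subst modstar_eq) auto
    then show ?thesis using mem[of a] H by simp
  next
    assume "b+m = a+j"
    then have "modstar (a+j) m = b" using H j assms by (subst modstar_eq) auto
    then show ?thesis using mem[of a] H by simp
  next
    assume "a = b+j"
    then have "modstar (b+j) m = a" using H j assms by (subst modstar_eq) auto
    then show ?thesis using mem[of b] H by (simp add: insert_commute)
  next
    assume "a+m = b+j"
    then have "modstar (b+j) m = a" using H j assms by (subst modstar_eq) auto
    then show ?thesis using mem[of b] H by (simp add: insert_commute)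
  qed
qed

definition cadj :: "nat \<Rightarrow> nat \<Rightarrow> nat \<Rightarrow> bool" where
  "cadj k a b \<longleftrightarrow> {a,b} \<in> Ck_edges k"

lemma cadj_sym: "cadj k a b = cadj k b a"
  by (simp add: cadj_def insert_commute)

lemma ck_even:
  assumes "k = 2*r"
  shows "cadj k a b \<longleftrightarrow> (a \<in> {1..4*r+2} \<and> b \<in> {1..4*r+2} \<and>
     (\<exists>j\<in>{1..r}. b = a+j \<or> b+(4*r+2) = a+j \<or> a = b+j \<or> a+(4*r+2) = b+j))"
proof -
  have "Ck_edges k = circ_pow_edges (4*r+2) r" using assms by (simp add: Ck_edges_def)
  then show ?thesis unfolding cadj_def by (simp add: circ_adj)
qed

lemma ck_odd:
  assumes "k = 2*r+1"
  shows "cadj k a b \<longleftrightarrow> (a \<in> {1..4*r+4} \<and> b \<in> {1..4*r+4} \<and>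
     (\<exists>j\<in>{1..r}. b = a+j \<or> b+(4*r+4) = a+j \<or> a = b+j \<or> a+(4*r+4) = b+j))
     \<or> (\<exists>i. ((1 \<le> i \<and> i \<le> r+1) \<or> (2*r+3 \<le> i \<and> i \<le> 3*r+3)) \<and>
           ((a = i \<and> b = i+r+1) \<or> (b = i \<and> a = i+r+1)))"
proof -
  have e: "Suc (Suc (Suc (Suc (4 * r)))) = 4*r+4" by simp
  have "Ck_edges k = circ_pow_edges (4*r+4) r \<union>
       {{i, i + (r+1)} | i. i \<in> {1..r+1} \<union> ({1..2*r+2+(r+1)} - {1..2*r+2})}"
    using assms by (simp add: Ck_edges_def) (simp only: e)
  moreover have "{a,b} \<in> {{i, i + (r+1)} | i. i \<in> {1..r+1} \<union> ({1..2*r+2+(r+1)} - {1..2*r+2})}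
     \<longleftrightarrow> (\<exists>i. ((1 \<le> i \<and> i \<le> r+1) \<or> (2*r+3 \<le> i \<and> i \<le> 3*r+3)) \<and>
           ((a = i \<and> b = i+r+1) \<or> (b = i \<and> a = i+r+1)))"
    apply (simp add: doubleton_eq_iff)
    apply (rule iffI)
     apply (elim exE conjE)
     apply (rule_tac x=i in exI)
     apply auto[1]
    apply (elim exE conjE)
    apply (rule_tac x=i in exI)
    apply auto
    done
  ultimately show ?thesis unfolding cadj_def by (simp add: circ_adj)
qed



definition cyc :: "nat \<Rightarrow> nat \<Rightarrow> nat" where
  "cyc m z = (if z > m then z - m else z)"

lemma far_circ:
  fixes m a r x y l j :: nat
  assumes "m = 2*a" "2*r < a" "y = x + a \<or> x = y + a" "1 \<le> j" "j \<le> r"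
    "l = y+j \<or> l+m = y+j \<or> y = l+j \<or> y+m = l+j"
  shows "l \<noteq> x \<and> \<not> (\<exists>j'\<in>{1..r}. x = l+j' \<or> x+m = l+j' \<or> l = x+j' \<or> l+m = x+j')"
proof -
  have "l \<noteq> x" using assms(3-6) assms(1,2) by (elim disjE; linarith)
  moreover have False if "j' \<in> {1..r}" "x = l+j' \<or> x+m = l+j' \<or> l = x+j' \<or> l+m = x+j'" for j'
    using that(2) assms(3) assms(6) assms(1,2,4,5) that(1) by (elim disjE; simp; linarith)
  ultimately show ?thesis by blast
qed

lemma fwd_leaf:
  assumes "y \<in> {1..m}" "1 \<le> j" "j < m"
  shows "cyc m (y+j) \<in> {1..m} \<and> (cyc m (y+j) = y+j \<or> cyc m (y+j) + m = y+j)"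
  using assms by (auto simp: cyc_def)

lemma bwd_leaf:
  assumes "y \<in> {1..m}" "1 \<le> j" "j < m"
  shows "cyc m (y+m-j) \<in> {1..m} \<and> (y = cyc m (y+m-j) + j \<or> y + m = cyc m (y+m-j) + j)"
  using assms by (auto simp: cyc_def)

lemma leaves_inj:
  assumes "y \<in> {1..m}" "2*r < m"
  shows "inj_on (\<lambda>j. cyc m (y+j)) {1..r}" "inj_on (\<lambda>j. cyc m (y+m-j)) {1..r}"
    "(\<lambda>j. cyc m (y+j)) ` {1..r} \<inter> (\<lambda>j. cyc m (y+m-j)) ` {1..r} = {}"
    "y \<notin> (\<lambda>j. cyc m (y+j)) ` {1..r}" "y \<notin> (\<lambda>j. cyc m (y+m-j)) ` {1..r}"
  using assms by (auto simp: inj_on_def cyc_def split: if_splits)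

lemma antip_even:
  assumes k: "k = 2*r" and r: "1 \<le> r" and x: "x \<in> {1..4*r+2}"
  shows "\<exists>y L. y \<in> {1..4*r+2} \<and> L \<subseteq> {1..4*r+2} \<and> finite L \<and> card L = k \<and> y \<notin> L \<and> y \<noteq> x
     \<and> \<not> cadj k y x \<and> (\<forall>l\<in>L. cadj k y l \<and> l \<noteq> x \<and> \<not> cadj k l x)"
proof -
  define m where "m = 4*r+2"
  define y where "y = (if x \<le> 2*r+1 then x+2*r+1 else x-(2*r+1))"
  have y1: "y \<in> {1..m}" "y = x + (2*r+1) \<or> x = y + (2*r+1)" using x by (auto simp: y_def m_def)
  have y2: "y \<noteq> x \<and> \<not> cadj k y x"
  proof -
    have "y \<noteq> x" using y1(2) by auto
    moreover have False if "j \<in> {1..r}" "x = y+j \<or> x+m = y+j \<or> y = x+j \<or> y+m = x+j" for j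
      using that y1(2) m_def by (elim disjE; simp; linarith)
    ultimately show ?thesis unfolding ck_even[OF k] m_def[symmetric] by blast
  qed
  define F where "F = (\<lambda>j. cyc m (y+j)) ` {1..r}"
  define B where "B = (\<lambda>j. cyc m (y+m-j)) ` {1..r}"
  have li: "inj_on (\<lambda>j. cyc m (y+j)) {1..r}" "inj_on (\<lambda>j. cyc m (y+m-j)) {1..r}" "F \<inter> B = {}"
    "y \<notin> F" "y \<notin> B"
    using leaves_inj[of y m r] y1 unfolding F_def B_def m_def by auto
  have card: "card (F \<union> B) = k"
    using li k by (simp add: card_Un_disjoint F_def B_def card_image)
  have good: "l \<in> {1..m} \<and> cadj k y l \<and> l \<noteq> x \<and> \<not> cadj k l x"
    if "l = y+j \<or> l+m = y+j \<or> y = l+j \<or> y+m = l+j" "j \<in> {1..r}" "l \<in> {1..m}" for l j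
  proof -
    have "l \<noteq> x \<and> \<not> (\<exists>j'\<in>{1..r}. x = l+j' \<or> x+m = l+j' \<or> l = x+j' \<or> l+m = x+j')"
      by (rule far_circ[of m "2*r+1" r y x j]) (use that y1 m_def in auto)
    moreover have "cadj k y l" unfolding ck_even[OF k] m_def[symmetric]
      using that y1(1) by (intro conjI bexI[of _ j]) auto
    ultimately show ?thesis unfolding ck_even[OF k] m_def[symmetric] using that(3) by blast
  qed
  have allgood: "\<forall>l\<in>F \<union> B. l \<in> {1..m} \<and> cadj k y l \<and> l \<noteq> x \<and> \<not> cadj k l x"
  proof
    fix l assume "l \<in> F \<union> B"
    then obtain j where j: "j \<in> {1..r}" "l = cyc m (y+j) \<or> l = cyc m (y+m-j)"
      unfolding F_def B_def by blast
    have jm: "j < m" using j m_def by auto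
    from j(2) show "l \<in> {1..m} \<and> cadj k y l \<and> l \<noteq> x \<and> \<not> cadj k l x"
    proof
      assume "l = cyc m (y+j)"
      then show ?thesis using fwd_leaf[of y m j] y1 j jm good[of l j] by auto
    next
      assume "l = cyc m (y+m-j)"
      then show ?thesis using bwd_leaf[of y m j] y1 j jm good[of l j] by auto
    qed
  qed
  show ?thesis
  proof (intro exI[of _ y] exI[of _ "F \<union> B"] conjI)
    show "finite (F \<union> B)" unfolding F_def B_def by simp
  qed (use y1 y2 li card allgood m_def in auto)
qed



lemma far_match:
  fixes r x y l j :: nat
  assumes "y = x + (2*r+2) \<or> x = y + (2*r+2)" "1 \<le> j" "j \<le> r"
    "l = y+j \<or> l+(4*r+4) = y+j \<or> y = l+j \<or> y+(4*r+4) = l+j"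
  shows "\<not> (\<exists>i. ((1 \<le> i \<and> i \<le> r+1) \<or> (2*r+3 \<le> i \<and> i \<le> 3*r+3)) \<and>
           ((l = i \<and> x = i+r+1) \<or> (x = i \<and> l = i+r+1)))"
proof
  assume "\<exists>i. ((1 \<le> i \<and> i \<le> r+1) \<or> (2*r+3 \<le> i \<and> i \<le> 3*r+3)) \<and>
           ((l = i \<and> x = i+r+1) \<or> (x = i \<and> l = i+r+1))"
  then obtain i where "(l = i \<and> x = i+r+1) \<or> (x = i \<and> l = i+r+1)" by blast
  then have "x = l + (r+1) \<or> l = x + (r+1)" by auto
  then show False using assms by (elim disjE; linarith)
qed

definition mtc :: "nat \<Rightarrow> nat \<Rightarrow> nat" where
  "mtc r z = (if z \<le> r+1 \<or> (2*r+3 \<le> z \<and> z \<le> 3*r+3) then z+r+1 else z-(r+1))"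

lemma antip_odd:
  assumes k: "k = 2*r+1" and r: "1 \<le> r" and x: "x \<in> {1..4*r+4}"
  shows "\<exists>y L. y \<in> {1..4*r+4} \<and> L \<subseteq> {1..4*r+4} \<and> finite L \<and> card L = k \<and> y \<notin> L \<and> y \<noteq> x
     \<and> \<not> cadj k y x \<and> (\<forall>l\<in>L. cadj k y l \<and> l \<noteq> x \<and> \<not> cadj k l x)"
proof -
  define m where "m = 4*r+4"
  define y where "y = (if x \<le> 2*r+2 then x+(2*r+2) else x-(2*r+2))"
  have y1: "y \<in> {1..m}" "y = x + (2*r+2) \<or> x = y + (2*r+2)" using x by (auto simp: y_def m_def)
  have y2: "y \<noteq> x \<and> \<not> cadj k y x"
  proof -
    have "y \<noteq> x" using y1(2) by auto
    moreover have False if "j \<in> {1..r}" "x = y+j \<or> x+m = y+j \<or> y = x+j \<or> y+m = x+j" for j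
      using that y1(2) m_def by (elim disjE; simp; linarith)
    moreover have False if "(y = i \<and> x = i+r+1) \<or> (x = i \<and> y = i+r+1)" for i
      using that y1(2) by (elim disjE; linarith)
    ultimately show ?thesis unfolding ck_odd[OF k] m_def[symmetric] by blast
  qed
  define F where "F = (\<lambda>j. cyc m (y+j)) ` {1..r}"
  define B where "B = (\<lambda>j. cyc m (y+m-j)) ` {1..r}"
  define t where "t = mtc r y"
  have li: "inj_on (\<lambda>j. cyc m (y+j)) {1..r}" "inj_on (\<lambda>j. cyc m (y+m-j)) {1..r}" "F \<inter> B = {}"
    "y \<notin> F" "y \<notin> B"
    using leaves_inj[of y m r] y1 unfolding F_def B_def m_def by auto
  have good: "l \<in> {1..m} \<and> cadj k y l \<and> l \<noteq> x \<and> \<not> cadj k l x \<and> l \<noteq> t"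
    if "l = y+j \<or> l+m = y+j \<or> y = l+j \<or> y+m = l+j" "j \<in> {1..r}" "l \<in> {1..m}" for l j
  proof -
    have "l \<noteq> x \<and> \<not> (\<exists>j'\<in>{1..r}. x = l+j' \<or> x+m = l+j' \<or> l = x+j' \<or> l+m = x+j')"
      by (rule far_circ[of m "2*r+2" r y x j]) (use that y1 m_def in auto)
    moreover have "\<not> (\<exists>i. ((1 \<le> i \<and> i \<le> r+1) \<or> (2*r+3 \<le> i \<and> i \<le> 3*r+3)) \<and>
           ((l = i \<and> x = i+r+1) \<or> (x = i \<and> l = i+r+1)))"
      by (rule far_match[of y x r j]) (use that y1 m_def in auto)
    moreover have "cadj k y l" unfolding ck_odd[OF k] m_def[symmetric]
      using that y1(1) by blast
    moreover have "l \<noteq> t"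
    proof
      assume "l = t"
      then have "l = y + (r+1) \<or> y = l + (r+1)" unfolding t_def mtc_def by (auto split: if_splits)
      then show False using that(1,2) m_def by (elim disjE; simp; linarith)
    qed
    ultimately show ?thesis unfolding ck_odd[OF k] m_def[symmetric] using that(3) by blast
  qed
  have allgood: "\<forall>l\<in>F \<union> B. l \<in> {1..m} \<and> cadj k y l \<and> l \<noteq> x \<and> \<not> cadj k l x \<and> l \<noteq> t"
  proof
    fix l assume "l \<in> F \<union> B"
    then obtain j where j: "j \<in> {1..r}" "l = cyc m (y+j) \<or> l = cyc m (y+m-j)"
      unfolding F_def B_def by blast
    have jm: "j < m" using j m_def by auto
    from j(2) show "l \<in> {1..m} \<and> cadj k y l \<and> l \<noteq> x \<and> \<not> cadj k l x \<and> l \<noteq> t"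
    proof
      assume "l = cyc m (y+j)"
      then show ?thesis using fwd_leaf[of y m j] y1 j jm good[of l j] by auto
    next
      assume "l = cyc m (y+m-j)"
      then show ?thesis using bwd_leaf[of y m j] y1 j jm good[of l j] by auto
    qed
  qed
  have tform: "((y \<le> r+1 \<or> (2*r+3 \<le> y \<and> y \<le> 3*r+3)) \<and> t = y+r+1) \<or>
      (\<not>(y \<le> r+1 \<or> (2*r+3 \<le> y \<and> y \<le> 3*r+3)) \<and> y = t+r+1)"
    using y1(1) m_def unfolding t_def mtc_def by auto
  have tgood: "t \<in> {1..m} \<and> cadj k y t \<and> t \<noteq> x \<and> \<not> cadj k t x \<and> t \<noteq> y"
  proof -
    have "t \<in> {1..m}" "t \<noteq> y" using tform y1(1) m_def by auto
    moreover have "cadj k y t" unfolding ck_odd[OF k]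
    proof (intro disjI2)
      show "\<exists>i. ((1 \<le> i \<and> i \<le> r+1) \<or> (2*r+3 \<le> i \<and> i \<le> 3*r+3)) \<and>
           ((y = i \<and> t = i+r+1) \<or> (t = i \<and> y = i+r+1))"
      proof -
        consider (a) "y \<le> r+1 \<or> (2*r+3 \<le> y \<and> y \<le> 3*r+3)" "t = y+r+1"
          | (b) "\<not>(y \<le> r+1 \<or> (2*r+3 \<le> y \<and> y \<le> 3*r+3))" "y = t+r+1" using tform by blast
        then show ?thesis
        proof cases
          case a then show ?thesis using y1(1) by (intro exI[of _ y]) auto
        next
          case b
          then have "(1 \<le> t \<and> t \<le> r+1) \<or> (2*r+3 \<le> t \<and> t \<le> 3*r+3)" using y1(1) m_def by auto
          then show ?thesis using b by (intro exI[of _ t]) auto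
        qed
      qed
    qed
    moreover have "t \<noteq> x" using tform y1(2) by (elim disjE conjE; linarith)
    moreover have False if "j \<in> {1..r}" "x = t+j \<or> x+m = t+j \<or> t = x+j \<or> t+m = x+j" for j
      using that tform y1(2) m_def by (elim disjE conjE; simp; linarith)
    moreover have False if "((1 \<le> i \<and> i \<le> r+1) \<or> (2*r+3 \<le> i \<and> i \<le> 3*r+3))"
       "(t = i \<and> x = i+r+1) \<or> (x = i \<and> t = i+r+1)" for i
      using that tform y1 m_def by (elim disjE conjE; simp; linarith)
    ultimately show ?thesis unfolding ck_odd[OF k] m_def[symmetric] by blast
  qed
  have fin: "finite (F \<union> B)" unfolding F_def B_def by simp
  have cFB: "card (F \<union> B) = 2*r"
  proof -
    have "card F = r" "card B = r" using li(1,2) unfolding F_def B_def by (simp_all add: card_image)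
    moreover have "card (F \<union> B) = card F + card B"
      by (rule card_Un_disjoint) (use li(3) in \<open>simp_all add: F_def B_def\<close>)
    ultimately show ?thesis by simp
  qed
  have tn: "t \<notin> F \<union> B" using allgood by blast
  have card: "card (insert t (F \<union> B)) = k"
    using fin tn cFB k by simp
  have sub: "insert t (F \<union> B) \<subseteq> {1..m}" using allgood tgood by blast
  have yn: "y \<notin> insert t (F \<union> B)" using li(4,5) tgood by blast
  have lg: "\<forall>l\<in>insert t (F \<union> B). cadj k y l \<and> l \<noteq> x \<and> \<not> cadj k l x" using allgood tgood by blast
  show ?thesis
  proof (intro exI[of _ y] exI[of _ "insert t (F \<union> B)"] conjI)
    show "finite (insert t (F \<union> B))" unfolding F_def B_def by simp
  qed (use y1(1) y2 card sub yn lg fin m_def in simp_all)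
qed



lemma verts_U:
  assumes "q = n div (2*k+3)" "p = n mod (2*k+3)"
  shows "U a \<in> B_verts k n \<longleftrightarrow> a \<in> {1..q+p}"
  using assms by (auto simp: B_verts_def Let_def)

lemma verts_W:
  assumes "q = n div (2*k+3)"
  shows "W i j \<in> B_verts k n \<longleftrightarrow> i \<in> {1..q} \<and> j \<in> {1..2*k+2}"
  using assms by (auto simp: B_verts_def Let_def)

lemma verts_finite: "finite (B_verts k n)"
proof -
  have "{W i j | i j. i \<in> {1..n div (2*k+3)} \<and> j \<in> {1..2*k+2}} \<subseteq>
     (\<lambda>(i,j). W i j) ` ({1..n div (2*k+3)} \<times> {1..2*k+2})" by auto
  then have "finite {W i j | i j. i \<in> {1..n div (2*k+3)} \<and> j \<in> {1..2*k+2}}"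
    by (rule finite_subset) simp
  then show ?thesis by (simp add: B_verts_def Let_def)
qed

lemma EW:
  assumes "{W i z, v} \<in> B_edges k n"
  shows "(v = U i \<and> z = 1) \<or> (\<exists>b. v = W i b \<and> cadj k z b)"
  using assms unfolding B_edges_def Let_def
  by (auto simp: doubleton_eq_iff cadj_def insert_commute split: if_splits)

lemma EU:
  assumes "q = n div (2*k+3)" "p = n mod (2*k+3)"
    "{U a, v} \<in> B_edges k n" "a \<ge> q+2"
  shows "\<exists>b. v = U b \<and> q+1 \<le> b \<and> b \<le> q+p"
  using assms unfolding B_edges_def Let_def
  by (auto simp: doubleton_eq_iff split: if_splits)

lemma e1:
  assumes "q = n div (2*k+3)" "i \<in> {1..q}"
  shows "{W i 1, U i} \<in> B_edges k n"
  using assms unfolding B_edges_def Let_def by (auto simp: insert_commute)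

lemma e2:
  assumes "q = n div (2*k+3)" "p = n mod (2*k+3)" "p \<ge> 1" "q \<ge> 1"
  shows "{U (q+1), U q} \<in> B_edges k n"
proof -
  have "min 1 p = 1" using assms by simp
  then show ?thesis
    using assms unfolding B_edges_def Let_def by (auto simp: insert_commute intro!: exI[of _ q])
qed

lemma e3:
  assumes "q = n div (2*k+3)" "p = n mod (2*k+3)" "p \<ge> 2" "j \<in> {1..p-1}"
  shows "{U (q+j), U (q+p)} \<in> B_edges k n"
  using assms unfolding B_edges_def Let_def by (auto simp: insert_commute)

lemma e4:
  assumes "q = n div (2*k+3)" "i \<in> {1..q}" "cadj k a b"
  shows "{W i a, W i b} \<in> B_edges k n"
  using assms unfolding B_edges_def Let_def cadj_def by blast



lemma upper_graph:
  assumes "k \<ge> 2"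
  shows "\<exists>S. S \<subseteq> {1..2*k+2} \<and> finite S \<and> card S = k+1 \<and> 1 \<notin> S \<and> (\<forall>b\<in>S. b = k+2 \<or> cadj k b (k+2))"
proof (cases "even k")
  case True
  then obtain r where k: "k = 2*r" by blast
  show ?thesis
  proof (intro exI[of _ "{r+2..3*r+2}"] conjI ballI)
    fix b assume b: "b \<in> {r+2..3*r+2}"
    show "b = k+2 \<or> cadj k b (k+2)"
    proof (cases "b < k+2")
      case True
      then show ?thesis using b assms k unfolding ck_even[OF k] by (auto intro!: bexI[of _ "k+2-b"])
    next
      case False
      then show ?thesis using b assms k unfolding ck_even[OF k] by (auto intro!: bexI[of _ "b-(k+2)"])
    qed
  qed (use k assms in auto)
next
  case False
  then obtain r where k: "k = 2*r+1" by (metis oddE)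
  show ?thesis
  proof (intro exI[of _ "{r+3..3*r+4}"] conjI ballI)
    fix b assume b: "b \<in> {r+3..3*r+4}"
    show "b = k+2 \<or> cadj k b (k+2)"
    proof (cases "b < k+2")
      case True
      then show ?thesis using b assms k unfolding ck_odd[OF k] by (auto intro!: bexI[of _ "k+2-b"])
    next
      case False
      show ?thesis
      proof (cases "b = 3*r+4")
        case True
        then show ?thesis using k unfolding ck_odd[OF k] by (auto intro!: exI[of _ "2*r+3"])
      next
        case F2: False
        then show ?thesis using False b assms k unfolding ck_odd[OF k] by (auto intro!: bexI[of _ "b-(k+2)"])
      qed
    qed
  qed (use k assms in auto)
qed



lemma antip:
  assumes "k \<ge> 2" "x \<in> {1..2*k+2}"
  shows "\<exists>y L. y \<in> {1..2*k+2} \<and> L \<subseteq> {1..2*k+2} \<and> finite L \<and> card L = k \<and> y \<notin> L \<and> y \<noteq> x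
     \<and> \<not> cadj k y x \<and> (\<forall>l\<in>L. cadj k y l \<and> l \<noteq> x \<and> \<not> cadj k l x)"
proof (cases "even k")
  case True
  then obtain r where k: "k = 2*r" by blast
  have r: "1 \<le> r" and e: "2*k+2 = 4*r+2" using assms k by auto
  show ?thesis using antip_even[OF k r, of x] assms(2) unfolding e by blast
next
  case False
  then obtain r where k: "k = 2*r+1" by (metis oddE)
  have r: "1 \<le> r" and e: "2*k+2 = 4*r+4" using assms k by auto
  show ?thesis using antip_odd[OF k r, of x] assms(2) unfolding e by blast
qed

lemma upper:
  assumes k2: "k \<ge> 2" and q: "q = n div (2*k+3)" and p: "p = n mod (2*k+3)" and q1: "q \<ge> 1"
  defines "D0 \<equiv> U ` {1..q} \<union> (\<lambda>i. W i (k+2)) ` {1..q} \<union> (if p \<ge> k+2 then {U (q+p)} else {})"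
  shows "star_isolating (B_verts k n) (B_edges k n) k D0"
    and "card D0 = 2*q + (if p \<ge> k+2 then 1 else 0)"
proof -
  define V where "V = B_verts k n"
  define E where "E = B_edges k n"
  define Rm where "Rm = V - closed_nbhd V E D0"
  have sub: "D0 \<subseteq> V" unfolding D0_def V_def using verts_U[OF q p] verts_W[OF q] by auto
  have notR: "v \<notin> Rm" if "v \<in> D0 \<or> (\<exists>w\<in>D0. {v,w} \<in> E)" for v
    using that unfolding Rm_def closed_nbhd_def by auto
  have R1: "i \<in> {1..q} \<and> j \<in> {1..2*k+2} \<and> j \<noteq> 1 \<and> j \<noteq> k+2 \<and> \<not> cadj k j (k+2)" if "W i j \<in> Rm" for i j
  proof -
    have iv: "i \<in> {1..q}" "j \<in> {1..2*k+2}" using that verts_W[OF q] unfolding Rm_def V_def by auto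
    have "j \<noteq> 1"
    proof
      assume "j = 1"
      then have "{W i j, U i} \<in> E" using e1[OF q iv(1)] E_def by simp
      moreover have "U i \<in> D0" using iv D0_def by auto
      ultimately show False using notR that by blast
    qed
    moreover have "j \<noteq> k+2"
    proof
      assume "j = k+2"
      then have "W i j \<in> D0" using iv D0_def by auto
      then show False using notR that by blast
    qed
    moreover have "\<not> cadj k j (k+2)"
    proof
      assume "cadj k j (k+2)"
      then have "{W i j, W i (k+2)} \<in> E" using e4[OF q iv(1)] E_def by simp
      moreover have "W i (k+2) \<in> D0" using iv D0_def by auto
      ultimately show False using notR that by blast
    qed
    ultimately show ?thesis using iv by blast
  qed
  have R2: "q+2 \<le> a \<and> a \<le> q+p \<and> p < k+2" if "U a \<in> Rm" for a
  proof -
    have av: "a \<in> {1..q+p}" using that verts_U[OF q p] unfolding Rm_def V_def by auto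
    have "a > q"
    proof (rule ccontr)
      assume "\<not> a > q"
      then have "U a \<in> D0" using av D0_def by auto
      then show False using notR that by blast
    qed
    moreover have "a \<noteq> q+1"
    proof
      assume a: "a = q+1"
      then have "p \<ge> 1" using av by auto
      then have "{U a, U q} \<in> E" using e2[OF q p _ q1] a E_def by simp
      moreover have "U q \<in> D0" using q1 D0_def by auto
      ultimately show False using notR that by blast
    qed
    moreover have "p < k+2"
    proof (rule ccontr)
      assume pk: "\<not> p < k+2"
      then have inD: "U (q+p) \<in> D0" unfolding D0_def by auto
      show False
      proof (cases "a = q+p")
        case True then show ?thesis using inD notR that by blast
      next
        case False
        then have j: "a - q \<in> {1..p-1}" "p \<ge> 2" using av pk \<open>a > q\<close> by auto
        have "{U (q+(a-q)), U (q+p)} \<in> E" using e3[OF q p j(2) j(1)] E_def by simp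
        then have "{U a, U (q+p)} \<in> E" using \<open>a > q\<close> by simp
        then show ?thesis using inD notR that by blast
      qed
    qed
    ultimately show ?thesis using av by auto
  qed
  have nostar: "\<not> has_star Rm E k"
  proof
    assume "has_star Rm E k"
    then obtain c L where cL: "c \<in> Rm" "L \<subseteq> Rm" "c \<notin> L" "card L = k" "finite L" "\<forall>x\<in>L. {c,x} \<in> E"
      unfolding has_star_def by blast
    have cI: "card (insert c L) = k+1" using cL by simp
    show False
    proof (cases c)
      case (W i j)
      define T where "T = {b \<in> {1..2*k+2}. b \<noteq> 1 \<and> b \<noteq> k+2 \<and> \<not> cadj k b (k+2)}"
      have "insert c L \<subseteq> W i ` T"
      proof
        fix v assume v: "v \<in> insert c L"
        show "v \<in> W i ` T"
        proof (cases "v = c")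
          case True then show ?thesis using R1[of i j] cL(1) W T_def by auto
        next
          case False
          then have "v \<in> L" using v by auto
          then have e: "{W i j, v} \<in> E" "v \<in> Rm" using cL W by auto
          from EW[of i j v k n] e(1) E_def
          have "(v = U i \<and> j = 1) \<or> (\<exists>b. v = W i b \<and> cadj k j b)" by simp
          then show ?thesis
          proof
            assume "v = U i \<and> j = 1"
            then show ?thesis using R2[of i] R1[of i j] e(2) cL(1) W by auto
          next
            assume "\<exists>b. v = W i b \<and> cadj k j b"
            then obtain b where "v = W i b" by blast
            then show ?thesis using R1[of i b] e(2) T_def by auto
          qed
        qed
      qed
      then have "card (insert c L) \<le> card (W i ` T)" by (rule card_mono[rotated]) (simp add: T_def)
      then have "k+1 \<le> card (W i ` T)" using cI by simp
      also have "\<dots> \<le> card T" by (rule card_image_le) (simp add: T_def)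
      also have "card T \<le> k"
      proof -
        obtain S where S: "S \<subseteq> {1..2*k+2}" "finite S" "card S = k+1" "1 \<notin> S"
          "\<forall>b\<in>S. b = k+2 \<or> cadj k b (k+2)" using upper_graph[OF k2] by blast
        have "T \<subseteq> {1..2*k+2} - insert 1 S" using S(5) T_def by auto
        then have "card T \<le> card ({1..2*k+2} - insert 1 S)" by (rule card_mono[rotated]) simp
        also have "\<dots> = (2*k+2) - (k+2)"
          using S by (subst card_Diff_subset) auto
        finally show ?thesis by simp
      qed
      finally show False by simp
    next
      case (U a)
      have a: "q+2 \<le> a" "a \<le> q+p" "p < k+2" using R2 cL(1) U by auto
      have "insert c L \<subseteq> U ` {q+2..q+p}"
      proof
        fix v assume v: "v \<in> insert c L"
        show "v \<in> U ` {q+2..q+p}"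
        proof (cases "v = c")
          case True then show ?thesis using a U by auto
        next
          case False
          then have "v \<in> L" using v by auto
          then have e: "{U a, v} \<in> E" "v \<in> Rm" using cL U by auto
          then obtain b where "v = U b" using EU[OF q p, of a v] a E_def by auto
          then show ?thesis using R2[of b] e(2) by auto
        qed
      qed
      then have "card (insert c L) \<le> card (U ` {q+2..q+p})" by (rule card_mono[rotated]) simp
      then have "k+1 \<le> card (U ` {q+2..q+p})" using cI by simp
      also have "\<dots> \<le> card {q+2..q+p}" by (rule card_image_le) simp
      finally show False using a by simp
    qed
  qed
  show "star_isolating (B_verts k n) (B_edges k n) k D0"
    unfolding star_isolating_def using sub nostar Rm_def V_def E_def by simp
  have c1: "card (U ` {1..q}) = q" by (simp add: card_image inj_on_def)
  have c2: "card ((\<lambda>i. W i (k+2)) ` {1..q}) = q" by (simp add: card_image inj_on_def)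
  have c12: "card (U ` {1..q} \<union> (\<lambda>i. W i (k+2)) ` {1..q}) = 2*q"
    using c1 c2 by (subst card_Un_disjoint) auto
  show "card D0 = 2*q + (if p \<ge> k+2 then 1 else 0)"
  proof (cases "p \<ge> k+2")
    case True
    then have "U (q+p) \<notin> U ` {1..q} \<union> (\<lambda>i. W i (k+2)) ` {1..q}" by auto
    then show ?thesis using True c12 unfolding D0_def by simp
  next
    case False
    then show ?thesis using c12 unfolding D0_def by simp
  qed
qed



lemma block:
  assumes k2: "k \<ge> 2" and q: "q = n div (2*k+3)" and iq: "i \<in> {1..q}"
    and D: "star_isolating (B_verts k n) (B_edges k n) k D"
  shows "2 \<le> card (D \<inter> insert (U i) (W i ` {1..2*k+2}))"
proof (rule ccontr)
  define V where "V = B_verts k n"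
  define E where "E = B_edges k n"
  define Bi where "Bi = insert (U i) (W i ` {1..2*k+2})"
  assume "\<not> 2 \<le> card (D \<inter> insert (U i) (W i ` {1..2*k+2}))"
  then have c1: "card (D \<inter> Bi) \<le> 1" unfolding Bi_def by simp
  have finB: "finite (D \<inter> Bi)" unfolding Bi_def by simp
  have DV: "D \<subseteq> V" using D unfolding star_isolating_def V_def by simp
  have only: "w = w'" if "w \<in> D \<inter> Bi" "w' \<in> D \<inter> Bi" for w w'
  proof (rule ccontr)
    assume "w \<noteq> w'"
    then have "card {w, w'} = 2" by simp
    moreover have "card {w,w'} \<le> card (D \<inter> Bi)" using that finB by (intro card_mono) auto
    ultimately show False using c1 by simp
  qed
  obtain x where x: "x \<in> {1..2*k+2}"
    and P: "\<And>v z. v \<in> D \<Longrightarrow> W i z = v \<or> {W i z, v} \<in> E \<Longrightarrow> z = x \<or> cadj k z x"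
  proof (cases "\<exists>x0\<in>{1..2*k+2}. W i x0 \<in> D")
    case True
    then obtain x0 where x0: "x0 \<in> {1..2*k+2}" "W i x0 \<in> D" by blast
    have x0B: "W i x0 \<in> D \<inter> Bi" using x0 Bi_def by auto
    have nU: "U i \<notin> D" using only[OF x0B, of "U i"] Bi_def by auto
    have nW: "b = x0" if "W i b \<in> D" for b
    proof -
      have "b \<in> {1..2*k+2}" using that DV verts_W[OF q] V_def by auto
      then have "W i b \<in> D \<inter> Bi" using that Bi_def by auto
      then show ?thesis using only[OF x0B] by auto
    qed
    show ?thesis
    proof (rule that[OF x0(1)])
      fix v z assume v: "v \<in> D" "W i z = v \<or> {W i z, v} \<in> E"
      from v(2) show "z = x0 \<or> cadj k z x0"
      proof
        assume "W i z = v" then show ?thesis using nW v(1) by auto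
      next
        assume "{W i z, v} \<in> E"
        then have "(v = U i \<and> z = 1) \<or> (\<exists>b. v = W i b \<and> cadj k z b)" using EW E_def by simp
        then show ?thesis using nU nW v(1) by auto
      qed
    qed
  next
    case False
    have nW: "False" if "W i b \<in> D" for b
    proof -
      have "b \<in> {1..2*k+2}" using that DV verts_W[OF q] V_def by auto
      then show False using False that by auto
    qed
    show ?thesis
    proof (rule that[of 1])
      fix v z assume v: "v \<in> D" "W i z = v \<or> {W i z, v} \<in> E"
      from v(2) show "z = 1 \<or> cadj k z 1"
      proof
        assume "W i z = v" then show ?thesis using nW v(1) by auto
      next
        assume "{W i z, v} \<in> E"
        then have "(v = U i \<and> z = 1) \<or> (\<exists>b. v = W i b \<and> cadj k z b)" using EW E_def by simp
        then show ?thesis using nW v(1) by auto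
      qed
    qed simp
  qed
  obtain y L where yL: "y \<in> {1..2*k+2}" "L \<subseteq> {1..2*k+2}" "finite L" "card L = k" "y \<notin> L" "y \<noteq> x"
     "\<not> cadj k y x" "\<forall>l\<in>L. cadj k y l \<and> l \<noteq> x \<and> \<not> cadj k l x"
    using antip[OF k2 x] by blast
  have rem: "W i z \<in> V - closed_nbhd V E D" if "z \<in> {1..2*k+2}" "z \<noteq> x" "\<not> cadj k z x" for z
  proof -
    have "W i z \<in> V" using that(1) iq verts_W[OF q] V_def by auto
    moreover have "W i z \<notin> D" using P[of "W i z" z] that by auto
    moreover have "\<not> (\<exists>v\<in>D. {W i z, v} \<in> E)" using P that by blast
    ultimately show ?thesis unfolding closed_nbhd_def by auto
  qed
  have "has_star (V - closed_nbhd V E D) E k"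
    unfolding has_star_def
  proof (intro exI[of _ "W i y"] exI[of _ "W i ` L"] conjI)
    show "W i y \<in> V - closed_nbhd V E D" using rem yL by blast
    show "W i ` L \<subseteq> V - closed_nbhd V E D" using rem yL by blast
    show "W i y \<notin> W i ` L" using yL by auto
    show "card (W i ` L) = k" using yL by (simp add: card_image inj_on_def)
    show "finite (W i ` L)" using yL by simp
    show "\<forall>xa\<in>W i ` L. {W i y, xa} \<in> E" using yL e4[OF q iq] E_def by auto
  qed
  then show False using D unfolding star_isolating_def V_def E_def by simp
qed

lemma remblock:
  assumes k2: "k \<ge> 2" and q: "q = n div (2*k+3)" and p: "p = n mod (2*k+3)" and pk: "p \<ge> k+2"
    and D: "star_isolating (B_verts k n) (B_edges k n) k D"
  shows "D \<inter> U ` {q+1..q+p} \<noteq> {}"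
proof
  define V where "V = B_verts k n"
  define E where "E = B_edges k n"
  assume emp: "D \<inter> U ` {q+1..q+p} = {}"
  have rem: "U a \<in> V - closed_nbhd V E D" if a: "a \<in> {q+2..q+p}" for a
  proof -
    have "U a \<in> V" using a verts_U[OF q p] V_def by auto
    moreover have "U a \<notin> D" using emp a by auto
    moreover have "\<not> (\<exists>v\<in>D. {U a, v} \<in> E)"
    proof
      assume "\<exists>v\<in>D. {U a, v} \<in> E"
      then obtain v where v: "v \<in> D" "{U a, v} \<in> E" by blast
      then obtain b where "v = U b" "q+1 \<le> b" "b \<le> q+p" using EU[OF q p, of a v] a v(2) E_def by auto
      then show False using emp v(1) by auto
    qed
    ultimately show ?thesis unfolding closed_nbhd_def by auto
  qed
  have "has_star (V - closed_nbhd V E D) E k"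
    unfolding has_star_def
  proof (intro exI[of _ "U (q+p)"] exI[of _ "U ` {q+2..q+k+1}"] conjI)
    show "U (q+p) \<in> V - closed_nbhd V E D" using rem pk by auto
    show "U ` {q+2..q+k+1} \<subseteq> V - closed_nbhd V E D" using rem pk by auto
    show "U (q+p) \<notin> U ` {q+2..q+k+1}" using pk by auto
    show "card (U ` {q+2..q+k+1}) = k" by (simp add: card_image inj_on_def)
    show "finite (U ` {q+2..q+k+1})" by simp
    show "\<forall>xa\<in>U ` {q+2..q+k+1}. {U (q+p), xa} \<in> E"
    proof
      fix xa assume "xa \<in> U ` {q+2..q+k+1}"
      then obtain a where a: "xa = U a" "a \<in> {q+2..q+k+1}" by blast
      then have j: "a - q \<in> {1..p-1}" "p \<ge> 2" using pk by auto
      have "{U (q+(a-q)), U (q+p)} \<in> E" using e3[OF q p j(2) j(1)] E_def by simp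
      then show "{U (q+p), xa} \<in> E" using a by (simp add: insert_commute)
    qed
  qed
  then show False using D unfolding star_isolating_def V_def E_def by simp
qed

lemma lower:
  assumes k2: "k \<ge> 2" and q: "q = n div (2*k+3)" and p: "p = n mod (2*k+3)"
    and D: "star_isolating (B_verts k n) (B_edges k n) k D"
  shows "2*q + (if p \<ge> k+2 then 1 else 0) \<le> card D"
proof -
  define Bi where "Bi i = insert (U i) (W i ` {1..2*k+2})" for i
  define A where "A = (\<Union>i\<in>{1..q}. D \<inter> Bi i)"
  define R where "R = D \<inter> U ` {q+1..q+p}"
  have finD: "finite D" using D verts_finite finite_subset unfolding star_isolating_def by blast
  have cA: "card A = (\<Sum>i\<in>{1..q}. card (D \<inter> Bi i))"
    unfolding A_def by (rule card_UN_disjoint) (auto simp: Bi_def finD)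
  have "(\<Sum>i\<in>{1..q}. 2) \<le> (\<Sum>i\<in>{1..q}. card (D \<inter> Bi i))"
    by (rule sum_mono) (use block[OF k2 q _ D] Bi_def in auto)
  then have cA2: "2*q \<le> card A" using cA by simp
  have cR: "(if p \<ge> k+2 then 1 else 0) \<le> card R"
  proof (cases "p \<ge> k+2")
    case True
    then have "R \<noteq> {}" using remblock[OF k2 q p True D] R_def by simp
    moreover have "finite R" using finD R_def by simp
    ultimately show ?thesis using True by (simp add: card_gt_0_iff Suc_le_eq)
  qed simp
  have disj: "A \<inter> R = {}" unfolding A_def R_def Bi_def by auto
  have "card (A \<union> R) = card A + card R"
    by (rule card_Un_disjoint) (use finD disj in \<open>auto simp: A_def R_def\<close>)
  moreover have "card (A \<union> R) \<le> card D"
    by (rule card_mono[OF finD]) (auto simp: A_def R_def)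
  ultimately show ?thesis using cA2 cR by linarith
qed

theorem lemma3:
  fixes k n :: nat
  assumes "k \<ge> 2" and "n \<ge> 2*k+3"
  shows "iota_star (B_verts k n) (B_edges k n) k = (2*n) div (2*k+3)"
proof -
  define q where "q = n div (2*k+3)"
  define p where "p = n mod (2*k+3)"
  define val where "val = 2*q + (if p \<ge> k+2 then 1 else 0)"
  have q1: "q \<ge> 1"
  proof -
    have "(2*k+3) div (2*k+3) \<le> n div (2*k+3)" using assms(2) by (rule div_le_mono)
    then show ?thesis using q_def by simp
  qed
  have pl: "p < 2*k+3" using p_def by simp
  have nq: "n = q*(2*k+3) + p" using q_def p_def by (metis div_mult_mod_eq)
  have n2: "2*n = 2*p + (2*q)*(2*k+3)" using nq by simp
  have "(2*n) div (2*k+3) = 2*q + (2*p) div (2*k+3)" unfolding n2 by simp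
  also have "(2*p) div (2*k+3) = (if p \<ge> k+2 then 1 else 0)"
  proof (cases "p \<ge> k+2")
    case True
    then have "2*p = (2*k+3) + (2*p - (2*k+3))" "2*p - (2*k+3) < 2*k+3" using pl by auto
    then show ?thesis using True by (metis div_add_self1 div_less add_0 less_nat_zero_code le_add2
          add_diff_cancel_left' div_le_dividend le_less)
  next
    case False
    then show ?thesis by simp
  qed
  finally have valeq: "(2*n) div (2*k+3) = val" unfolding val_def .
  define S where "S = {D. star_isolating (B_verts k n) (B_edges k n) k D}"
  obtain D0 where D0: "star_isolating (B_verts k n) (B_edges k n) k D0" "card D0 = val"
    using upper[OF assms(1) q_def p_def q1] val_def by blast
  have finS: "finite (card ` S)"
  proof -
    have "S \<subseteq> Pow (B_verts k n)" unfolding S_def star_isolating_def by auto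
    then have "finite S" using verts_finite finite_subset by blast
    then show ?thesis by simp
  qed
  have "Min (card ` S) = val"
  proof (rule Min_eqI[OF finS])
    fix y assume "y \<in> card ` S"
    then obtain D where "D \<in> S" "y = card D" by blast
    then show "val \<le> y" using lower[OF assms(1) q_def p_def] S_def val_def by auto
  next
    show "val \<in> card ` S" using D0 S_def by force
  qed
  then show ?thesis unfolding iota_star_def S_def valeq by simp
qed


end
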